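(* Let $L\subset\mathbb{C}$ be a single slit domain, i.e. the complex plane minus a single slit lying on the negative real axis. Let $f=h+\overline{g}\in\mathcal{S}_H^0$ map $\mathbb{D}$ onto $L$, satisfy $h(z)-g(z)=\frac{z}{(1-z)^2}$ for $z\in\mathbb{D}$, and have dilatation $\omega=g'/h'=b^2$ with $b(z)=\varepsilon z$, $\varepsilon\in\{1,-1\}$. Let $S$ be the minimal surface over $L$ with projection $f$, i.e. $S=\{(u(z),v(z),F(z)):z\in\mathbb{D}\}$ with $u=\mathrm{Re}\,f$, $v=\mathrm{Im}\,f$, $F(z)=\mathrm{Re}\int_0^z2ib(t)h'(t)\,dt+c$, $c\in\mathbb{R}$. Then $$u=\mathrm{Re}\left(\frac{2z^3-3z^2+3z}{3(1-z)^3}\right),\qquad v=\mathrm{Im}\left(\frac{z}{(1-z)^2}\right),\qquad F=\pm\mathrm{Im}\left(\frac{1}{(z-1)^2}+\frac{2}{3(z-1)^3}\right)+c,$$ where the sign $\pm$ corresponds to $\varepsilon$ and $c$ is a real constant.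
   Context: $\mathbb{D}$ is the unit disk. A harmonic mapping $f=h+\overline g$ ($h,g$ analytic on $\mathbb{D}$) is sense-preserving if $h'\ne0$ and its dilatation $\omega=g'/h'$ satisfies $|\omega|<1$. $\mathcal{S}_H^0$ is the class of sense-preserving univalent harmonic mappings $f=h+\overline g$ on $\mathbb{D}$ with $h(0)=g(0)=0$, $h'(0)=1$, $g'(0)=0$. Minimal surface with projection $f$ (Weierstrass–Enneper): $S=\{(\mathrm{Re}\int_0^z\phi_1+c_1,\mathrm{Re}\int_0^z\phi_2+c_2,\mathrm{Re}\int_0^z\phi_3+c_3)\}$ with $\phi_j$ analytic, $\phi_1^2+\phi_2^2+\phi_3^2=0$, $f=\mathrm{Re}\int_0^z\phi_1+i\,\mathrm{Re}\int_0^z\phi_2$ univalent sense-preserving harmonic onto the domain; for $\omega=b^2$, $b(z)=\pm z$, one has $\phi_1=h'+g'$, $\phi_2=-i(h'-g')$, $\phi_3=2ibh'$. *)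

theory Defs
  imports "HOL-Complex_Analysis.Complex_Analysis"
begin

abbreviation unit_disk :: "complex set" where
  "unit_disk \<equiv> ball 0 1"

definition harm :: "(complex \<Rightarrow> complex) \<Rightarrow> (complex \<Rightarrow> complex) \<Rightarrow> complex \<Rightarrow> complex" where
  "harm h g z = h z + cnj (g z)"

text \<open>Class S_H^0: sense-preserving univalent harmonic maps f = h + conj g on the disk
  with h(0)=g(0)=0, h'(0)=1, g'(0)=0.  Sense-preserving: h' nonzero and
  the dilatation g'/h' has modulus < 1.\<close>
definition SH0 :: "(complex \<Rightarrow> complex) \<Rightarrow> (complex \<Rightarrow> complex) \<Rightarrow> bool" where
  "SH0 h g \<longleftrightarrow>
     h holomorphic_on unit_disk \<and> g holomorphic_on unit_disk \<and>
     h 0 = 0 \<and> g 0 = 0 \<and> deriv h 0 = 1 \<and> deriv g 0 = 0 \<and>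
     (\<forall>z\<in>unit_disk. deriv h z \<noteq> 0 \<and> norm (deriv g z / deriv h z) < 1) \<and>
     inj_on (harm h g) unit_disk"

definition single_slit_domain :: "complex set \<Rightarrow> bool" where
  "single_slit_domain L \<longleftrightarrow>
     (\<exists>a::real. a > 0 \<and> L = UNIV - {complex_of_real t | t. t \<le> -a})"

definition min_surf_height ::
  "(complex \<Rightarrow> complex) \<Rightarrow> real \<Rightarrow> real \<Rightarrow> complex \<Rightarrow> real" where
  "min_surf_height h eps c z =
     Re (contour_integral (linepath 0 z)
           (\<lambda>t. 2 * \<i> * (complex_of_real eps * t) * deriv h t)) + c"

end

theory Submission
  imports Defs
begin

lemma disk_ne1: "z \<in> unit_disk \<Longrightarrow> 1 - z \<noteq> 0"
  by (auto simp: dist_norm)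

lemma disk_ne1': "z \<in> unit_disk \<Longrightarrow> 1 + z \<noteq> 0"
proof
  assume "z \<in> unit_disk" "1 + z = 0"
  then have "z = -1" by (simp add: add_eq_0_iff)
  with \<open>z \<in> unit_disk\<close> show False by simp
qed

lemma derk: assumes ne: "1 - z \<noteq> (0::complex)" shows "((\<lambda>z. z / (1 - z)^2) has_field_derivative (1 + z) / (1 - z)^3) (at z)"
  apply (rule derivative_eq_intros refl | use ne in \<open>simp; fail\<close>)+
  using ne apply (simp add: divide_simps)
  apply (simp add: algebra_simps power2_eq_square power3_eq_cube power4_eq_xxxx)
  done
lemma derH: assumes ne: "1 - z \<noteq> (0::complex)" shows "((\<lambda>z. (1 / (1 - z)^3 - 1) / 3) has_field_derivative 1 / (1 - z)^4) (at z)"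
  apply (rule derivative_eq_intros refl | use ne in \<open>simp; fail\<close>)+
  using ne apply (simp add: divide_simps)
  done
lemma derQ: assumes ne: "1 - z \<noteq> (0::complex)" shows "((\<lambda>t. 1 / (3 * (1 - t)^3) - 1 / (2 * (1 - t)^2)) has_field_derivative z / (1 - z)^4) (at z)"
  apply (rule derivative_eq_intros refl | use ne in \<open>simp; fail\<close>)+
  using ne apply (simp add: divide_simps)
  apply algebra
  done

theorem theorem4p1:
  fixes h g :: "complex \<Rightarrow> complex" and L :: "complex set"
    and eps c :: real
  assumes "single_slit_domain L"
    and "SH0 h g"
    and "harm h g ` unit_disk = L"
    and "\<forall>z\<in>unit_disk. h z - g z = z / (1 - z)^2"
    and "eps \<in> {1, -1}"
    and "\<forall>z\<in>unit_disk. deriv g z / deriv h z = (complex_of_real eps * z)^2"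
  shows "\<forall>z\<in>unit_disk.
           Re (harm h g z) = Re ((2*z^3 - 3*z^2 + 3*z) / (3 * (1 - z)^3)) \<and>
           Im (harm h g z) = Im (z / (1 - z)^2) \<and>
           min_surf_height h eps c z =
             eps * Im (1 / (z - 1)^2 + 2 / (3 * (z - 1)^3)) + c"
proof -
  have hol: "h holomorphic_on unit_disk" "g holomorphic_on unit_disk" "h 0 = 0"
    and nz: "\<And>z. z \<in> unit_disk \<Longrightarrow> deriv h z \<noteq> 0"
    using assms(2) unfolding SH0_def by auto
  have eps2: "(complex_of_real eps)^2 = 1" using assms(5) by auto
  have dg: "deriv g z = z^2 * deriv h z" if "z \<in> unit_disk" for z
  proof -
    have "deriv g z / deriv h z = z^2" using assms(6) that eps2 by (simp add: power_mult_distrib)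
    then show ?thesis using nz[OF that] by (simp add: field_simps)
  qed
  define k' where "k' z = (1 + z) / (1 - z)^3" for z :: complex
  have kder: "((\<lambda>z. z / (1 - z)^2) has_field_derivative k' z) (at z)" if "z \<in> unit_disk" for z
    unfolding k'_def using derk disk_ne1[OF that] by blast
  have dhg: "deriv h z - deriv g z = k' z" if "z \<in> unit_disk" for z
  proof -
    have "((\<lambda>z. h z - g z) has_field_derivative deriv h z - deriv g z) (at z)"
      using holomorphic_derivI[OF hol(1) _ that] holomorphic_derivI[OF hol(2) _ that]
      by (intro derivative_intros) auto
    then have "((\<lambda>z. z / (1 - z)^2) has_field_derivative deriv h z - deriv g z) (at z)"
      by (rule has_field_derivative_transform_within_open[where S=unit_disk]) (use that assms(4) in auto)
    then show ?thesis using kder[OF that] DERIV_unique by blast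
  qed
  have dh: "deriv h z = 1 / (1 - z)^4" if "z \<in> unit_disk" for z
  proof -
    have ne: "1 - z \<noteq> 0" "1 + z \<noteq> 0" using disk_ne1[OF that] disk_ne1'[OF that] by auto
    have "(1 - z^2) * deriv h z = (1 + z) / (1 - z)^3"
      using dhg[OF that] dg[OF that] unfolding k'_def by (simp add: algebra_simps)
    moreover have "1 - z^2 = (1 - z) * (1 + z)" by (simp add: algebra_simps power2_eq_square)
    ultimately have "(1 - z) * (1 + z) * deriv h z = (1 + z) / (1 - z)^3" by simp
    then show ?thesis using ne by (simp add: field_simps) algebra
  qed
  define H where "H z = (1 / (1 - z)^3 - 1) / 3" for z :: complex
  have Hder: "(H has_field_derivative 1 / (1 - z)^4) (at z)" if "z \<in> unit_disk" for z
    unfolding H_def[abs_def] using derH disk_ne1[OF that] by blast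
  have "\<exists>C. \<forall>z\<in>unit_disk. h z - H z = C"
  proof (rule has_field_derivative_zero_constant)
    fix z assume z: "z \<in> unit_disk"
    have "((\<lambda>z. h z - H z) has_field_derivative deriv h z - 1 / (1 - z)^4) (at z within unit_disk)"
      using holomorphic_derivI[OF hol(1) _ z] Hder[OF z]
      by (intro derivative_intros) (auto intro: has_field_derivative_at_within)
    then show "((\<lambda>z. h z - H z) has_field_derivative 0) (at z within unit_disk)"
      using dh[OF z] by simp
  qed auto
  then obtain C where C: "\<And>z. z \<in> unit_disk \<Longrightarrow> h z - H z = C" by blast
  have "C = 0" using C[of 0] hol(3) by (simp add: H_def)
  then have hH: "h z = H z" if "z \<in> unit_disk" for z using C[OF that] by simp
  have gH: "g z = H z - z / (1 - z)^2" if "z \<in> unit_disk" for z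
    using assms(4) that hH[OF that] by (auto simp: algebra_simps)
  show ?thesis
  proof (intro ballI conjI)
    fix z assume z: "z \<in> unit_disk"
    have ne: "1 - z \<noteq> 0" using disk_ne1[OF z] .
    have hz: "harm h g z = H z + cnj (H z - z / (1 - z)^2)"
      unfolding harm_def using hH[OF z] gH[OF z] by simp
    have id1: "(2*z^3 - 3*z^2 + 3*z) / (3 * (1 - z)^3) = H z + (H z - z / (1 - z)^2)"
      unfolding H_def using ne by (simp add: field_simps) algebra
    show "Re (harm h g z) = Re ((2*z^3 - 3*z^2 + 3*z) / (3 * (1 - z)^3))"
      unfolding hz id1 plus_complex.sel by (simp only: cnj.sel)
    show "Im (harm h g z) = Im (z / (1 - z)^2)"
      unfolding hz plus_complex.sel cnj.sel minus_complex.sel by simp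
    define G where "G t = 2 * \<i> * complex_of_real eps * (1 / (3 * (1 - t)^3) - 1 / (2 * (1 - t)^2))" for t :: complex
    have Gder: "(G has_field_derivative (2 * \<i> * (complex_of_real eps * t) * deriv h t)) (at t within unit_disk)"
      if t: "t \<in> unit_disk" for t
    proof -
      have ne: "1 - t \<noteq> 0" using disk_ne1[OF t] .
      have "(G has_field_derivative (2 * \<i> * complex_of_real eps) * (t / (1 - t)^4)) (at t)"
        unfolding G_def[abs_def] by (intro DERIV_cmult derQ ne)
      then have "(G has_field_derivative (2 * \<i> * (complex_of_real eps * t) * (1 / (1 - t)^4))) (at t)"
        by (simp add: field_simps)
      then show ?thesis using dh[OF t] by (simp add: has_field_derivative_at_within)
    qed
    have sub: "path_image (linepath 0 z) \<subseteq> unit_disk"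
      using z by (simp add: closed_segment_subset convex_ball)
    have "((\<lambda>t. 2 * \<i> * (complex_of_real eps * t) * deriv h t) has_contour_integral (G z - G 0)) (linepath 0 z)"
      using contour_integral_primitive[OF Gder valid_path_linepath sub] by simp
    then have ci: "contour_integral (linepath 0 z) (\<lambda>t. 2 * \<i> * (complex_of_real eps * t) * deriv h t) = G z - G 0"
      by (rule contour_integral_unique)
    have "G z - G 0 = 2 * \<i> * complex_of_real eps * (1 / (3 * (1 - z)^3) - 1 / (2 * (1 - z)^2) + 1/6)"
      unfolding G_def by (simp add: algebra_simps)
    also have "\<dots> = \<i> * complex_of_real eps * (2 / (3 * (1 - z)^3) - 1 / (1 - z)^2) + \<i> * complex_of_real eps / 3"
      using ne by (simp add: field_simps)
    also have "2 / (3 * (1 - z)^3) - 1 / (1 - z)^2 = - (1 / (z - 1)^2 + 2 / (3 * (z - 1)^3))"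
      using ne by (simp add: field_simps) algebra
    finally have "G z - G 0 = - (\<i> * complex_of_real eps * (1 / (z - 1)^2 + 2 / (3 * (z - 1)^3))) + \<i> * complex_of_real eps / 3"
      by (simp only: mult_minus_right)
    then show "min_surf_height h eps c z = eps * Im (1 / (z - 1)^2 + 2 / (3 * (z - 1)^3)) + c"
      unfolding min_surf_height_def ci by simp
  qed
qed

end
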